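(* Every quasi-normal operator $T\in\mathcal{L}(\mathcal{H})$ with closed range is an SD operator.
   Context: $\mathcal{H}$ is a Hilbert space, $\mathcal{L}(\mathcal{H})$ the bounded operators on it. $T$ is quasi-normal if $T$ commutes with $T^*T$. For $T$ with closed range, $T^\dagger$ is its Moore–Penrose inverse (unique solution of $TT^\dagger T=T$, $T^\dagger TT^\dagger=T^\dagger$, $(T^\dagger T)^*=T^\dagger T$, $(TT^\dagger)^*=TT^\dagger$). $T$ is SD if it has closed range and $T^*T^\dagger=T^\dagger T^*$. *)

theory Defs
  imports "HOL-Analysis.Analysis"
begin

text \<open>Complex inner product spaces and complex Hilbert spaces (not in the distribution).
  The inner product is conjugate-linear in the first argument.\<close>

class complex_inner = real_normed_vector +
  fixes scaleC :: "complex \<Rightarrow> 'a \<Rightarrow> 'a" (infixr \<open>*\<^sub>C\<close> 75)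
    and cinner :: "'a \<Rightarrow> 'a \<Rightarrow> complex"
  assumes scaleC_add_right: "c *\<^sub>C (x + y) = c *\<^sub>C x + c *\<^sub>C y"
    and scaleC_add_left: "(a + b) *\<^sub>C x = a *\<^sub>C x + b *\<^sub>C x"
    and scaleC_scaleC: "a *\<^sub>C (b *\<^sub>C x) = (a * b) *\<^sub>C x"
    and scaleC_one: "1 *\<^sub>C x = x"
    and scaleR_scaleC: "scaleR r x = complex_of_real r *\<^sub>C x"
    and cinner_commute: "cinner x y = cnj (cinner y x)"
    and cinner_add_left: "cinner (x + y) z = cinner x z + cinner y z"
    and cinner_scaleC_left: "cinner (c *\<^sub>C x) y = cnj c * cinner x y"
    and cinner_self_real: "Im (cinner x x) = 0"
    and cinner_self_nonneg: "0 \<le> Re (cinner x x)"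
    and cinner_eq_zero_iff: "cinner x x = 0 \<longleftrightarrow> x = 0"
    and norm_eq_sqrt_cinner: "norm x = sqrt (Re (cinner x x))"

class chilbert_space = complex_inner + complete_space

definition clinear :: "('a::complex_inner \<Rightarrow> 'b::complex_inner) \<Rightarrow> bool" where
  "clinear f \<longleftrightarrow> (\<forall>x y. f (x + y) = f x + f y) \<and> (\<forall>c x. f (c *\<^sub>C x) = c *\<^sub>C f x)"

definition bounded_clinear :: "('a::complex_inner \<Rightarrow> 'b::complex_inner) \<Rightarrow> bool" where
  "bounded_clinear f \<longleftrightarrow> clinear f \<and> (\<exists>K. \<forall>x. norm (f x) \<le> norm x * K)"

definition adj :: "('a::chilbert_space \<Rightarrow> 'a) \<Rightarrow> ('a \<Rightarrow> 'a)" where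
  "adj T = (THE S. \<forall>x y. cinner (T x) y = cinner x (S y))"

definition is_mp_inverse :: "('a::chilbert_space \<Rightarrow> 'a) \<Rightarrow> ('a \<Rightarrow> 'a) \<Rightarrow> bool" where
  "is_mp_inverse T S \<longleftrightarrow> bounded_clinear S \<and> T \<circ> S \<circ> T = T \<and> S \<circ> T \<circ> S = S
     \<and> adj (S \<circ> T) = S \<circ> T \<and> adj (T \<circ> S) = T \<circ> S"

definition mp_inverse :: "('a::chilbert_space \<Rightarrow> 'a) \<Rightarrow> ('a \<Rightarrow> 'a)" where
  "mp_inverse T = (THE S. is_mp_inverse T S)"

definition quasi_normal :: "('a::chilbert_space \<Rightarrow> 'a) \<Rightarrow> bool" where
  "quasi_normal T \<longleftrightarrow> T \<circ> (adj T \<circ> T) = (adj T \<circ> T) \<circ> T"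

definition SD :: "('a::chilbert_space \<Rightarrow> 'a) \<Rightarrow> bool" where
  "SD T \<longleftrightarrow> closed (range T) \<and> adj T \<circ> mp_inverse T = mp_inverse T \<circ> adj T"

end

theory Submission
  imports Defs
begin




lemma scaleC_zero_left [simp]: "0 *\<^sub>C x = 0"
proof -
  have "(0::real) *\<^sub>R x = complex_of_real 0 *\<^sub>C x" by (rule scaleR_scaleC)
  hence "0 = 0 *\<^sub>C x" by simp
  thus ?thesis by (rule sym)
qed

lemma scaleC_minus_one: "(-1) *\<^sub>C x = - x"
proof -
  have "(-1::real) *\<^sub>R x = complex_of_real (-1) *\<^sub>C x" by (rule scaleR_scaleC)
  hence "- x = (-1) *\<^sub>C x" by simp
  thus ?thesis by (rule sym)
qed

lemma scaleC_zero_right [simp]: "c *\<^sub>C 0 = 0"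
  using scaleC_add_right[of c 0 0] by simp

lemma scaleC_minus_right: "c *\<^sub>C (- x) = - (c *\<^sub>C x)"
  by (metis add.right_inverse add_eq_0_iff scaleC_add_right scaleC_zero_right)

lemma scaleC_diff_right: "c *\<^sub>C (x - y) = c *\<^sub>C x - c *\<^sub>C y"
  using scaleC_add_right[of c x "- y"] by (simp add: scaleC_minus_right)

lemma cinner_zero_left [simp]: "cinner 0 y = 0"
  using cinner_add_left[of 0 0 y] by simp

lemma cinner_zero_right [simp]: "cinner x 0 = 0"
  by (metis cinner_commute cinner_zero_left complex_cnj_zero)

lemma cinner_add_right: "cinner x (y + z) = cinner x y + cinner x z"
  by (metis cinner_add_left cinner_commute complex_cnj_add)

lemma cinner_scaleC_right: "cinner x (c *\<^sub>C y) = c * cinner x y"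
  by (metis cinner_commute cinner_scaleC_left complex_cnj_cnj complex_cnj_mult)

lemma cinner_minus_left: "cinner (- x) y = - cinner x y"
proof -
  have "cinner (- x) y + cinner x y = 0" by (simp add: cinner_add_left[symmetric])
  thus ?thesis by (simp add: eq_neg_iff_add_eq_0)
qed

lemma cinner_minus_right: "cinner x (- y) = - cinner x y"
proof -
  have "cinner x (- y) + cinner x y = 0" by (simp add: cinner_add_right[symmetric])
  thus ?thesis by (simp add: eq_neg_iff_add_eq_0)
qed

lemma cinner_diff_left: "cinner (x - y) z = cinner x z - cinner y z"
  using cinner_add_left[of x "- y" z] by (simp add: cinner_minus_left)

lemma cinner_diff_right: "cinner x (y - z) = cinner x y - cinner x z"
  using cinner_add_right[of x y "- z"] by (simp add: cinner_minus_right)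

lemma cinner_scaleR_left: "cinner (r *\<^sub>R x) y = of_real r * cinner x y"
  by (simp add: scaleR_scaleC cinner_scaleC_left)

lemma cinner_scaleR_right: "cinner x (r *\<^sub>R y) = of_real r * cinner x y"
  by (simp add: scaleR_scaleC cinner_scaleC_right)

lemma norm_sq: "(norm x)^2 = Re (cinner x x)"
  by (simp add: norm_eq_sqrt_cinner cinner_self_nonneg)

lemma cinner_self: "cinner x x = complex_of_real ((norm x)^2)"
  by (simp add: norm_sq complex_eq_iff cinner_self_real)

lemma cinner_self_eq_0: "cinner x x = 0 \<longleftrightarrow> x = 0"
  by (rule cinner_eq_zero_iff)

lemma cinner_ext: assumes "\<And>z. cinner z x = cinner z y" shows "x = y"
proof -
  have "cinner (x - y) (x - y) = 0" using assms[of "x - y"] by (simp add: cinner_diff_right)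
  thus ?thesis by (simp add: cinner_self_eq_0)
qed

lemma norm_diff_sq: "(norm (x - y))^2 = (norm x)^2 - 2 * Re (cinner x y) + (norm y)^2"
proof -
  have "cinner (x - y) (x - y) = cinner x x - cinner x y - cinner y x + cinner y y"
    by (simp add: cinner_diff_left cinner_diff_right)
  moreover have "Re (cinner y x) = Re (cinner x y)" by (subst cinner_commute) simp
  ultimately show ?thesis by (simp add: norm_sq)
qed

lemma norm_add_sq: "(norm (x + y))^2 = (norm x)^2 + 2 * Re (cinner x y) + (norm y)^2"
  using norm_diff_sq[of x "- y"] by (simp add: cinner_minus_right)

lemma norm_scaleC: "norm (c *\<^sub>C x) = cmod c * norm x"
proof -
  have "cinner (c *\<^sub>C x) (c *\<^sub>C x) = (cnj c * c) * cinner x x"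
    by (simp add: cinner_scaleC_left cinner_scaleC_right mult.assoc)
  also have "cnj c * c = complex_of_real ((cmod c)^2)" by (metis complex_norm_square mult.commute of_real_power)
  also have "complex_of_real ((cmod c)^2) * cinner x x = complex_of_real ((cmod c * norm x)^2)"
    by (simp add: cinner_self power_mult_distrib)
  finally have "(norm (c *\<^sub>C x))^2 = (cmod c * norm x)^2" by (simp add: norm_sq)
  thus ?thesis by (simp add: power2_eq_iff_nonneg)
qed

lemma Cauchy_Schwarz: "cmod (cinner x y) \<le> norm x * norm y"
proof (cases "y = 0")
  case True thus ?thesis by simp
next
  case False
  define c where "c = cinner x y"
  define s where "s = 1 / (norm y)^2"
  have ny: "norm y > 0" using False by simp
  have s0: "s \<ge> 0" by (simp add: s_def)
  have "0 \<le> (norm (x - (of_real s * cnj c) *\<^sub>C y))^2" by simp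
  also have "\<dots> = (norm x)^2 - 2 * Re (of_real s * cnj c * c) + (s * cmod c * norm y)^2"
    using s0 by (simp add: norm_diff_sq cinner_scaleC_right norm_scaleC c_def norm_mult abs_of_nonneg)
  also have "of_real s * cnj c * c = of_real (s * (cmod c)^2)"
    by (metis complex_norm_square mult.commute mult.assoc of_real_mult)
  also have "(s * cmod c * norm y)^2 = s * (cmod c)^2"
    using ny s0 by (simp add: abs_of_nonneg s_def power_mult_distrib power2_eq_square field_simps)
  finally have "0 \<le> (norm x)^2 - s * (cmod c)^2" by simp
  hence "(cmod c)^2 \<le> (norm x)^2 * (norm y)^2" using ny by (simp add: s_def field_simps)
  hence "(cmod c)^2 \<le> (norm x * norm y)^2" by (simp add: power_mult_distrib)
  thus ?thesis unfolding c_def by (simp add: power2_le_iff_abs_le)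
qed

lemma bounded_linear_cinner_right: "bounded_linear (cinner a)"
proof
  show "cinner a (x + y) = cinner a x + cinner a y" for x y by (rule cinner_add_right)
  show "cinner a (r *\<^sub>R x) = r *\<^sub>R cinner a x" for r x by (simp add: cinner_scaleR_right scaleR_conv_of_real)
  show "\<exists>K. \<forall>x. norm (cinner a x) \<le> norm x * K"
    by (rule exI[of _ "norm a"]) (metis Cauchy_Schwarz mult.commute)
qed

lemma bounded_linear_cinner_left: "bounded_linear (\<lambda>x. cinner x a)"
proof
  show "cinner (x + y) a = cinner x a + cinner y a" for x y by (rule cinner_add_left)
  show "cinner (r *\<^sub>R x) a = r *\<^sub>R cinner x a" for r x by (simp add: cinner_scaleR_left scaleR_conv_of_real)
  show "\<exists>K. \<forall>x. norm (cinner x a) \<le> norm x * K"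
    by (rule exI[of _ "norm a"]) (metis Cauchy_Schwarz)
qed





definition csubspace :: "'a::complex_inner set \<Rightarrow> bool" where
  "csubspace M \<longleftrightarrow> 0 \<in> M \<and> (\<forall>x\<in>M. \<forall>y\<in>M. x + y \<in> M) \<and> (\<forall>c. \<forall>x\<in>M. c *\<^sub>C x \<in> M)"

lemma csubspace_0: "csubspace M \<Longrightarrow> 0 \<in> M" by (simp add: csubspace_def)
lemma csubspace_add: "csubspace M \<Longrightarrow> x \<in> M \<Longrightarrow> y \<in> M \<Longrightarrow> x + y \<in> M" by (simp add: csubspace_def)
lemma csubspace_scaleC: "csubspace M \<Longrightarrow> x \<in> M \<Longrightarrow> c *\<^sub>C x \<in> M" by (simp add: csubspace_def)
lemma csubspace_scaleR: "csubspace M \<Longrightarrow> x \<in> M \<Longrightarrow> r *\<^sub>R x \<in> M" by (simp add: csubspace_def scaleR_scaleC)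
lemma csubspace_minus: "csubspace M \<Longrightarrow> x \<in> M \<Longrightarrow> - x \<in> M"
  by (metis csubspace_scaleC scaleC_minus_one)
lemma csubspace_diff: "csubspace M \<Longrightarrow> x \<in> M \<Longrightarrow> y \<in> M \<Longrightarrow> x - y \<in> M"
  using csubspace_add[of M x "- y"] csubspace_minus[of M y] by simp

lemma orth_of_min:
  assumes M: "csubspace M" and p: "p \<in> M" and min: "\<forall>m\<in>M. (norm (x - p))^2 \<le> (norm (x - m))^2"
    and m: "m \<in> M"
  shows "cinner (x - p) m = 0"
proof -
  define z where "z = x - p"
  define c where "c = cinner z m"
  define s where "s = 1 / ((norm m)^2 + 1)"
  define t where "t = of_real s * cnj c"
  have m1: "(norm m)^2 + 1 > 0" using zero_le_power2[of "norm m"] by linarith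
  have s0: "s > 0" using m1 by (simp add: s_def)
  have sB: "s * (norm m)^2 < 1" using m1 by (simp add: s_def divide_less_eq)
  have "p + t *\<^sub>C m \<in> M" using M p m by (simp add: csubspace_add csubspace_scaleC)
  hence "(norm z)^2 \<le> (norm (z - t *\<^sub>C m))^2" using min by (metis z_def diff_diff_eq)
  also have "\<dots> = (norm z)^2 - 2 * Re (t * c) + (s * cmod c * norm m)^2"
    using s0 by (simp add: norm_diff_sq cinner_scaleC_right norm_scaleC c_def t_def norm_mult abs_of_nonneg)
  also have "t * c = of_real (s * (cmod c)^2)"
    unfolding t_def by (metis complex_norm_square mult.commute mult.assoc of_real_mult)
  finally have ineq: "2 * (s * (cmod c)^2) \<le> (s * cmod c * norm m)^2" by simp
  define A where "A = (cmod c)^2"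
  have A0: "A \<ge> 0" by (simp add: A_def)
  have "2 * s * A \<le> s * (s * (norm m)^2 * A)" using ineq by (simp add: A_def power_mult_distrib power2_eq_square algebra_simps)
  hence "2 * A \<le> s * (norm m)^2 * A" using s0 by simp
  also have "\<dots> \<le> A" by (rule mult_left_le_one_le) (use sB A0 s0 in auto)
  finally have "A = 0" using A0 by simp
  thus ?thesis by (simp add: A_def c_def z_def)
qed

lemma proj_exists:
  fixes M :: "'a::chilbert_space set"
  assumes cl: "closed M" and M: "csubspace M"
  shows "\<exists>p\<in>M. \<forall>m\<in>M. cinner (x - p) m = 0"
proof -
  define D where "D = (\<lambda>m. (norm (x - m))^2) ` M"
  define d where "d = Inf D"
  have Dne: "D \<noteq> {}" using csubspace_0[OF M] by (auto simp: D_def)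
  have Dbdd: "bdd_below D" by (rule bdd_belowI[of _ 0]) (auto simp: D_def)
  have dle: "d \<le> (norm (x - m))^2" if "m \<in> M" for m
    unfolding d_def by (rule cInf_lower) (use that Dbdd in \<open>auto simp: D_def\<close>)
  have "\<exists>m\<in>M. (norm (x - m))^2 < d + inverse (real (Suc n))" for n
  proof -
    have "Inf D < d + inverse (real (Suc n))" by (simp add: d_def)
    then obtain y where "y \<in> D" "y < d + inverse (real (Suc n))"
      using cInf_less_iff[OF Dne Dbdd] by blast
    thus ?thesis by (auto simp: D_def)
  qed
  then obtain f where fM: "\<And>n. f n \<in> M" and fd: "\<And>n. (norm (x - f n))^2 < d + inverse (real (Suc n))"
    by metis
  have par: "(norm (f k - f j))^2 \<le> 2 * inverse (real (Suc k)) + 2 * inverse (real (Suc j))" for k j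
  proof -
    define mid where "mid = (1/2::real) *\<^sub>R (f k + f j)"
    have "mid \<in> M" unfolding mid_def using M fM by (simp add: csubspace_add csubspace_scaleR)
    hence dm: "d \<le> (norm (x - mid))^2" by (rule dle)
    define a where "a = x - f k"
    define b where "b = x - f j"
    have pl: "(norm (a + b))^2 + (norm (a - b))^2 = 2 * (norm a)^2 + 2 * (norm b)^2"
      by (simp add: norm_add_sq norm_diff_sq)
    have "a + b = 2 *\<^sub>R (x - mid)" by (simp add: a_def b_def mid_def algebra_simps scaleR_2)
    hence "(norm (a + b))^2 = 4 * (norm (x - mid))^2" by (simp add: power_mult_distrib)
    moreover have "norm (a - b) = norm (f k - f j)" by (simp add: a_def b_def norm_minus_commute)
    ultimately have "(norm (f k - f j))^2 = 2 * (norm a)^2 + 2 * (norm b)^2 - 4 * (norm (x - mid))^2"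
      using pl by simp
    thus ?thesis using fd[of k] fd[of j] dm by (simp add: a_def b_def)
  qed
  have "Cauchy f"
  proof (rule metric_CauchyI)
    fix e :: real assume e: "e > 0"
    obtain N :: nat where N: "4 / e^2 < real N" using reals_Archimedean2 by blast
    have e2: "e^2 > 0" using e by simp
    have "4 < real N * e^2" using N e2 by (simp add: field_simps)
    also have "\<dots> \<le> real (Suc N) * e^2" using e2 by (simp add: mult_right_mono)
    finally have N1: "4 * inverse (real (Suc N)) < e^2"
      by (simp add: field_simps)
    show "\<exists>N. \<forall>m\<ge>N. \<forall>n\<ge>N. dist (f m) (f n) < e"
    proof (intro exI allI impI)
      fix m n assume mn: "N \<le> m" "N \<le> n"
      have "inverse (real (Suc m)) \<le> inverse (real (Suc N))" using mn by (simp add: field_simps)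
      moreover have "inverse (real (Suc n)) \<le> inverse (real (Suc N))" using mn by (simp add: field_simps)
      ultimately have "(norm (f m - f n))^2 < e^2" using par[of m n] N1 by linarith
      hence "norm (f m - f n) < e" using e by (simp add: power_less_imp_less_base)
      thus "dist (f m) (f n) < e" by (simp add: dist_norm)
    qed
  qed
  hence "convergent f" by (simp add: Cauchy_convergent_iff)
  then obtain p where fp: "f \<longlonglongrightarrow> p" unfolding convergent_def by blast
  have pM: "p \<in> M" using closed_sequentially[OF cl] fM fp by blast
  have "(\<lambda>n. (norm (x - f n))^2) \<longlonglongrightarrow> (norm (x - p))^2"
    by (intro tendsto_intros fp)
  moreover have "(\<lambda>n. d + inverse (real (Suc n))) \<longlonglongrightarrow> d + 0"
    by (intro tendsto_intros LIMSEQ_inverse_real_of_nat)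
  ultimately have "(norm (x - p))^2 \<le> d + 0"
    by (rule LIMSEQ_le) (use fd less_imp_le in blast)
  hence pd: "(norm (x - p))^2 \<le> d" by simp
  have "\<forall>m\<in>M. (norm (x - p))^2 \<le> (norm (x - m))^2"
  proof
    fix m assume "m \<in> M"
    thus "(norm (x - p))^2 \<le> (norm (x - m))^2" using dle[of m] pd by linarith
  qed
  thus ?thesis using orth_of_min[OF M pM] pM by blast
qed

definition proj :: "'a::chilbert_space set \<Rightarrow> 'a \<Rightarrow> 'a" where
  "proj M x = (SOME p. p \<in> M \<and> (\<forall>m\<in>M. cinner (x - p) m = 0))"

lemma proj_prop:
  assumes "closed M" "csubspace M"
  shows "proj M x \<in> M \<and> (\<forall>m\<in>M. cinner (x - proj M x) m = 0)"
  unfolding proj_def by (rule someI_ex) (use proj_exists[OF assms, of x] in blast)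

lemma proj_in: "closed M \<Longrightarrow> csubspace M \<Longrightarrow> proj M x \<in> M"
  using proj_prop by blast

lemma proj_orth: "closed M \<Longrightarrow> csubspace M \<Longrightarrow> m \<in> M \<Longrightarrow> cinner (x - proj M x) m = 0"
  using proj_prop by blast

lemma proj_orth': "closed M \<Longrightarrow> csubspace M \<Longrightarrow> m \<in> M \<Longrightarrow> cinner m (x - proj M x) = 0"
  by (metis cinner_commute complex_cnj_zero proj_orth)

lemma proj_unique:
  assumes cl: "closed M" and M: "csubspace M" and p: "p \<in> M" and o: "\<forall>m\<in>M. cinner (x - p) m = 0"
  shows "proj M x = p"
proof -
  define q where "q = proj M x"
  have qM: "q \<in> M" and oq: "\<forall>m\<in>M. cinner (x - q) m = 0" using proj_prop[OF cl M] q_def by auto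
  have d: "p - q \<in> M" using M p qM by (rule csubspace_diff)
  have "cinner (x - q) (p - q) - cinner (x - p) (p - q) = 0" using o oq d by simp
  hence "cinner (p - q) (p - q) = 0" by (simp add: cinner_diff_left)
  thus ?thesis unfolding q_def[symmetric] by (simp add: cinner_self_eq_0)
qed

lemma proj_id: "closed M \<Longrightarrow> csubspace M \<Longrightarrow> x \<in> M \<Longrightarrow> proj M x = x"
  by (rule proj_unique) auto

lemma proj_add:
  assumes cl: "closed M" and M: "csubspace M"
  shows "proj M (x + y) = proj M x + proj M y"
proof (rule proj_unique[OF cl M])
  show "proj M x + proj M y \<in> M" using M proj_in[OF cl M] by (simp add: csubspace_add)
  show "\<forall>m\<in>M. cinner (x + y - (proj M x + proj M y)) m = 0"
  proof
    fix m assume "m \<in> M"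
    have e: "x + y - (proj M x + proj M y) = (x - proj M x) + (y - proj M y)" by (simp add: algebra_simps)
    show "cinner (x + y - (proj M x + proj M y)) m = 0"
      unfolding e cinner_add_left using proj_orth[OF cl M \<open>m \<in> M\<close>] by simp
  qed
qed

lemma proj_scaleC:
  assumes cl: "closed M" and M: "csubspace M"
  shows "proj M (c *\<^sub>C x) = c *\<^sub>C proj M x"
proof (rule proj_unique[OF cl M])
  show "c *\<^sub>C proj M x \<in> M" using M proj_in[OF cl M] by (simp add: csubspace_scaleC)
  show "\<forall>m\<in>M. cinner (c *\<^sub>C x - c *\<^sub>C proj M x) m = 0"
    using proj_orth[OF cl M] by (simp add: scaleC_diff_right[symmetric] cinner_scaleC_left)
qed

lemma proj_norm:
  assumes cl: "closed M" and M: "csubspace M"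
  shows "norm (proj M x) \<le> norm x"
proof -
  define p where "p = proj M x"
  have "cinner p (x - p) = 0" unfolding p_def by (rule proj_orth'[OF cl M proj_in[OF cl M]])
  hence "(norm (p + (x - p)))^2 = (norm p)^2 + (norm (x - p))^2" using norm_add_sq[of p "x - p"] by simp
  hence "(norm p)^2 \<le> (norm x)^2" by simp
  thus ?thesis unfolding p_def by (simp add: power2_le_iff_abs_le)
qed

lemma proj_sym:
  assumes cl: "closed M" and M: "csubspace M"
  shows "cinner (proj M x) y = cinner x (proj M y)"
proof -
  have "cinner (proj M x) y = cinner (proj M x) (proj M y) + cinner (proj M x) (y - proj M y)"
    by (simp add: cinner_diff_right)
  also have "cinner (proj M x) (y - proj M y) = 0" by (rule proj_orth'[OF cl M proj_in[OF cl M]])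
  also have "cinner x (proj M y) = cinner (proj M x) (proj M y) + cinner (x - proj M x) (proj M y)"
    by (simp add: cinner_diff_left)
  moreover have "cinner (x - proj M x) (proj M y) = 0" by (rule proj_orth[OF cl M proj_in[OF cl M]])
  ultimately show ?thesis by simp
qed





lemma bl_diff: "bounded_linear f \<Longrightarrow> f (x - y) = f x - f y"
  by (metis bounded_linear.linear linear_diff)

lemma bl_zero: "bounded_linear f \<Longrightarrow> f 0 = 0"
  by (metis bounded_linear.linear linear_0)

lemma bl_minus: "bounded_linear f \<Longrightarrow> f (- x) = - f x"
  by (metis bounded_linear.linear linear_neg)

lemma bcl_clinear: "bounded_clinear T \<Longrightarrow> clinear T"
  by (simp add: bounded_clinear_def)

lemma bcl_add: "bounded_clinear T \<Longrightarrow> T (x + y) = T x + T y"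
  by (simp add: bounded_clinear_def clinear_def)

lemma bcl_scaleC: "bounded_clinear T \<Longrightarrow> T (c *\<^sub>C x) = c *\<^sub>C T x"
  by (simp add: bounded_clinear_def clinear_def)

lemma bcl_bounded_linear: "bounded_clinear T \<Longrightarrow> bounded_linear T"
proof -
  assume T: "bounded_clinear T"
  show "bounded_linear T"
  proof
    show "T (x + y) = T x + T y" for x y by (rule bcl_add[OF T])
    show "T (r *\<^sub>R x) = r *\<^sub>R T x" for r x by (simp add: scaleR_scaleC bcl_scaleC[OF T])
    show "\<exists>K. \<forall>x. norm (T x) \<le> norm x * K" using T by (simp add: bounded_clinear_def)
  qed
qed

lemma bcl_diff: "bounded_clinear T \<Longrightarrow> T (x - y) = T x - T y"
  using bcl_bounded_linear bl_diff by blast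

lemma bcl_zero: "bounded_clinear T \<Longrightarrow> T 0 = 0"
  using bcl_bounded_linear bl_zero by blast

lemma bcl_minus: "bounded_clinear T \<Longrightarrow> T (- x) = - T x"
  using bcl_bounded_linear bl_minus by blast

lemma bcl_comp: "bounded_clinear S \<Longrightarrow> bounded_clinear T \<Longrightarrow> bounded_clinear (S \<circ> T)"
proof -
  assume S: "bounded_clinear S" and T: "bounded_clinear T"
  obtain KS where KS: "\<And>x. norm (S x) \<le> norm x * KS" "KS > 0"
    using bounded_linear.pos_bounded[OF bcl_bounded_linear[OF S]] by blast
  obtain KT where KT: "\<And>x. norm (T x) \<le> norm x * KT" "KT > 0"
    using bounded_linear.pos_bounded[OF bcl_bounded_linear[OF T]] by blast
  have b: "norm ((S \<circ> T) x) \<le> norm x * (KT * KS)" for x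
  proof -
    have "norm (S (T x)) \<le> norm (T x) * KS" by (rule KS)
    also have "\<dots> \<le> norm x * KT * KS" using KT(1)[of x] KS(2) by (simp add: mult_right_mono)
    finally show ?thesis by (simp add: mult.assoc)
  qed
  have "clinear (S \<circ> T)" unfolding clinear_def
    using bcl_add[OF S] bcl_add[OF T] bcl_scaleC[OF S] bcl_scaleC[OF T] by simp
  thus ?thesis unfolding bounded_clinear_def using b by blast
qed

lemma riesz:
  fixes f :: "'a::chilbert_space \<Rightarrow> complex"
  assumes add: "\<And>x y. f (x + y) = f x + f y" and sc: "\<And>c x. f (c *\<^sub>C x) = c * f x"
    and bd: "\<exists>K. \<forall>x. cmod (f x) \<le> norm x * K"
  shows "\<exists>y. \<forall>x. f x = cinner y x"
proof -
  have bl: "bounded_linear f"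
  proof
    show "f (x + y) = f x + f y" for x y by (rule add)
    show "f (r *\<^sub>R x) = r *\<^sub>R f x" for r x by (simp add: scaleR_scaleC sc scaleR_conv_of_real)
    show "\<exists>K. \<forall>x. norm (f x) \<le> norm x * K" using bd by simp
  qed
  define K0 where "K0 = f -` {0}"
  have cl: "closed K0" unfolding K0_def
    by (rule continuous_closed_vimage) (auto intro: linear_continuous_at bl)
  have sub: "csubspace K0"
    by (auto simp: csubspace_def K0_def add sc bl_zero[OF bl])
  show ?thesis
  proof (cases "\<forall>x. f x = 0")
    case True thus ?thesis by (intro exI[of _ 0]) simp
  next
    case False
    then obtain z where z: "f z \<noteq> 0" by blast
    define w where "w = z - proj K0 z"
    have "proj K0 z \<in> K0" by (rule proj_in[OF cl sub])
    hence fw: "f w = f z" by (simp add: w_def bl_diff[OF bl] K0_def)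
    hence "w \<noteq> 0" using z bl_zero[OF bl] by auto
    hence ww: "cinner w w \<noteq> 0" by (simp add: cinner_self_eq_0)
    have orth: "cinner w k = 0" if "k \<in> K0" for k
      unfolding w_def by (rule proj_orth[OF cl sub that])
    define y where "y = cnj (f w / cinner w w) *\<^sub>C w"
    have "f x = cinner y x" for x
    proof -
      define k where "k = x - (f x / f w) *\<^sub>C w"
      have "f k = 0" using z fw by (simp add: k_def bl_diff[OF bl] sc)
      hence "cinner w k = 0" by (intro orth) (simp add: K0_def)
      hence "cinner w x = (f x / f w) * cinner w w" by (simp add: k_def cinner_diff_right cinner_scaleC_right)
      thus ?thesis using z fw ww by (simp add: y_def cinner_scaleC_left)
    qed
    thus ?thesis by blast
  qed
qed

lemma adj_exists:
  fixes T :: "'a::chilbert_space \<Rightarrow> 'a"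
  assumes T: "bounded_clinear T"
  shows "\<exists>S. \<forall>x y. cinner (T x) y = cinner x (S y)"
proof -
  obtain K where K: "\<And>x. norm (T x) \<le> norm x * K" using T by (auto simp: bounded_clinear_def)
  have "\<forall>y. \<exists>z. \<forall>x. cinner (T x) y = cinner x z"
  proof
    fix y
    have "\<exists>z. \<forall>x. cinner y (T x) = cinner z x"
    proof (rule riesz)
      show "cinner y (T (x1 + x2)) = cinner y (T x1) + cinner y (T x2)" for x1 x2
        by (simp add: bcl_add[OF T] cinner_add_right)
      show "cinner y (T (c *\<^sub>C x)) = c * cinner y (T x)" for c x
        by (simp add: bcl_scaleC[OF T] cinner_scaleC_right)
      show "\<exists>K'. \<forall>x. cmod (cinner y (T x)) \<le> norm x * K'"
      proof (intro exI allI)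
        fix x
        have "cmod (cinner y (T x)) \<le> norm y * norm (T x)" by (rule Cauchy_Schwarz)
        also have "\<dots> \<le> norm y * (norm x * K)" by (rule mult_left_mono[OF K]) simp
        finally show "cmod (cinner y (T x)) \<le> norm x * (norm y * K)" by (simp add: algebra_simps)
      qed
    qed
    then obtain z where "\<forall>x. cinner y (T x) = cinner z x" by blast
    hence "\<forall>x. cinner (T x) y = cinner x z" by (metis cinner_commute)
    thus "\<exists>z. \<forall>x. cinner (T x) y = cinner x z" by blast
  qed
  thus ?thesis by metis
qed

lemma adj_unique:
  assumes "\<forall>x y. cinner (T x) y = cinner x (S y)"
  shows "adj T = S"
  unfolding adj_def
proof (rule the_equality)
  show "\<forall>x y. cinner (T x) y = cinner x (S y)" by (rule assms)
  fix S' assume S': "\<forall>x y. cinner (T x) y = cinner x (S' y)"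
  show "S' = S"
  proof
    fix y show "S' y = S y" by (rule cinner_ext) (metis S' assms)
  qed
qed

lemma adj_prop:
  fixes T :: "'a::chilbert_space \<Rightarrow> 'a"
  assumes T: "bounded_clinear T"
  shows "cinner (T x) y = cinner x (adj T y)"
proof -
  obtain S where S: "\<forall>x y. cinner (T x) y = cinner x (S y)" using adj_exists[OF T] by blast
  thus ?thesis using adj_unique[OF S] by simp
qed

lemma adj_prop':
  fixes T :: "'a::chilbert_space \<Rightarrow> 'a"
  assumes T: "bounded_clinear T"
  shows "cinner (adj T y) x = cinner y (T x)"
  by (metis adj_prop[OF T] cinner_commute)

lemma adj_bcl:
  fixes T :: "'a::chilbert_space \<Rightarrow> 'a"
  assumes T: "bounded_clinear T"
  shows "bounded_clinear (adj T)"
proof -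
  have a: "adj T (a + b) = adj T a + adj T b" for a b
    by (rule cinner_ext) (simp add: adj_prop[OF T, symmetric] cinner_add_right)
  have s: "adj T (c *\<^sub>C a) = c *\<^sub>C adj T a" for c a
    by (rule cinner_ext) (simp add: adj_prop[OF T, symmetric] cinner_scaleC_right)
  obtain K where K: "\<And>x. norm (T x) \<le> norm x * K" "K > 0"
    using bounded_linear.pos_bounded[OF bcl_bounded_linear[OF T]] by blast
  have b: "norm (adj T y) \<le> norm y * K" for y
  proof (cases "adj T y = 0")
    case True thus ?thesis using K(2) by simp
  next
    case False
    have "(norm (adj T y))^2 = Re (cinner (adj T y) (adj T y))" by (rule norm_sq)
    also have "\<dots> = Re (cinner (T (adj T y)) y)" by (simp add: adj_prop[OF T])
    also have "\<dots> \<le> cmod (cinner (T (adj T y)) y)" by (rule complex_Re_le_cmod)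
    also have "\<dots> \<le> norm (T (adj T y)) * norm y" by (rule Cauchy_Schwarz)
    also have "\<dots> \<le> norm (adj T y) * K * norm y" by (rule mult_right_mono[OF K(1)]) simp
    finally have "norm (adj T y) * norm (adj T y) \<le> norm (adj T y) * (norm y * K)"
      by (simp add: power2_eq_square algebra_simps)
    thus ?thesis using False by simp
  qed
  show ?thesis unfolding bounded_clinear_def clinear_def using a s b by blast
qed





lemma range_csubspace:
  assumes T: "bounded_clinear T" shows "csubspace (range T)"
  unfolding csubspace_def
proof (intro conjI ballI allI)
  have "T 0 = 0" by (rule bcl_zero[OF T])
  thus "0 \<in> range T" by (metis rangeI)
  show "x + y \<in> range T" if "x \<in> range T" "y \<in> range T" for x y
  proof -
    from that obtain a b where "x = T a" "y = T b" by blast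
    hence "x + y = T (a + b)" by (simp add: bcl_add[OF T])
    thus ?thesis by simp
  qed
  show "c *\<^sub>C x \<in> range T" if "x \<in> range T" for c x
  proof -
    from that obtain a where "x = T a" by blast
    hence "c *\<^sub>C x = T (c *\<^sub>C a)" by (simp add: bcl_scaleC[OF T])
    thus ?thesis by simp
  qed
qed

lemma baire_bound:
  fixes T :: "'a::chilbert_space \<Rightarrow> 'a"
  assumes T: "bounded_clinear T" and cl: "closed (range T)"
  shows "\<exists>C. \<forall>w\<in>range T. norm w \<le> C * norm (adj T w)"
proof -
  define R where "R = range T"
  define X where "X = top_of_set R"
  have Rsub: "csubspace R" unfolding R_def by (rule range_csubspace[OF T])
  define F where "F n = {y \<in> R. \<forall>w\<in>R. cmod (cinner w y) \<le> real n * norm (adj T w)}" for n :: nat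
  have closedF: "closedin X (F n)" for n
  proof -
    have "F n = R \<inter> (\<Inter>w\<in>R. {y. cmod (cinner w y) \<le> real n * norm (adj T w)})"
      by (auto simp: F_def)
    moreover have "closed (\<Inter>w\<in>R. {y. cmod (cinner w y) \<le> real n * norm (adj T w)})"
    proof (rule closed_INT, intro ballI)
      fix w :: 'a
      have c1: "continuous_on UNIV (\<lambda>y. cmod (cinner w y))"
        by (intro continuous_on_norm linear_continuous_on bounded_linear_cinner_right)
      have c2: "continuous_on UNIV (\<lambda>y::'a. real n * norm (adj T w))"
        by (rule continuous_on_const)
      show "closed {y. cmod (cinner w y) \<le> real n * norm (adj T w)}"
        by (rule closed_Collect_le[OF c1 c2])
    qed
    ultimately show ?thesis unfolding X_def by (simp add: closedin_closed_Int)
  qed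
  have union: "\<Union>(range F) = R"
  proof
    show "\<Union>(range F) \<subseteq> R" by (auto simp: F_def)
    show "R \<subseteq> \<Union>(range F)"
    proof
      fix y assume "y \<in> R"
      then obtain u where u: "y = T u" by (auto simp: R_def)
      define n where "n = nat \<lceil>norm u\<rceil>"
      have nu: "norm u \<le> real n" unfolding n_def by linarith
      have "y \<in> F n" unfolding F_def
      proof (intro CollectI conjI ballI)
        show "y \<in> R" by fact
        fix w assume "w \<in> R"
        have "cmod (cinner w y) = cmod (cinner (adj T w) u)" by (simp add: u adj_prop'[OF T])
        also have "\<dots> \<le> norm (adj T w) * norm u" by (rule Cauchy_Schwarz)
        also have "\<dots> \<le> real n * norm (adj T w)" using nu by (simp add: mult.commute mult_right_mono)
        finally show "cmod (cinner w y) \<le> real n * norm (adj T w)" .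
      qed
      thus "y \<in> \<Union>(range F)" by blast
    qed
  qed
  have "closedin euclidean R" using cl unfolding R_def by (rule closed_closedin[THEN iffD1])
  hence cms: "completely_metrizable_space X" unfolding X_def
    by (rule completely_metrizable_space_closedin[OF completely_metrizable_space_euclidean])
  have "\<exists>n. X interior_of F n \<noteq> {}"
  proof (rule ccontr)
    assume "\<not> ?thesis"
    hence "X interior_of \<Union>(range F) = {}"
      by (intro Baire_category_alt) (use cms closedF in auto)
    moreover have "X interior_of \<Union>(range F) = R" unfolding union X_def
      using interior_of_topspace[of "top_of_set R"] by simp
    moreover have "R \<noteq> {}" by (auto simp: R_def)
    ultimately show False by simp
  qed
  then obtain n y0 where y0: "y0 \<in> X interior_of F n" by blast
  then obtain U where U: "openin X U" "y0 \<in> U" "U \<subseteq> F n" by (auto simp: interior_of_def)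
  then obtain Ob where Ob: "open Ob" "U = R \<inter> Ob" by (auto simp: X_def openin_open)
  then obtain r where r: "r > 0" "ball y0 r \<subseteq> Ob" using U(2) open_contains_ball by blast
  have inF: "y \<in> F n" if "y \<in> R" "dist y0 y < r" for y
    using that r Ob U by auto
  have y0F: "y0 \<in> F n" using U by blast
  have y0R: "y0 \<in> R" using y0F by (simp add: F_def)
  have "norm w \<le> (4 * real n / r) * norm (adj T w)" if w: "w \<in> R" for w
  proof (cases "w = 0")
    case True thus ?thesis using r by simp
  next
    case False
    hence nw: "norm w > 0" by simp
    define s where "s = r / (2 * norm w)"
    have s0: "s > 0" using r nw by (simp add: s_def)
    define y where "y = y0 + s *\<^sub>R w"
    have yR: "y \<in> R" unfolding y_def using Rsub y0R w by (simp add: csubspace_add csubspace_scaleR)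
    have "dist y0 y = s * norm w" using s0 by (simp add: y_def dist_norm)
    also have "\<dots> = r / 2" using nw by (simp add: s_def)
    finally have "dist y0 y < r" using r by simp
    hence "y \<in> F n" using inF yR by blast
    hence b1: "cmod (cinner w y) \<le> real n * norm (adj T w)" using w by (simp add: F_def)
    have b2: "cmod (cinner w y0) \<le> real n * norm (adj T w)" using y0F w by (simp add: F_def)
    have "cinner w y - cinner w y0 = of_real s * cinner w w"
      by (simp add: y_def cinner_add_right cinner_scaleR_right)
    hence "cmod (cinner w y - cinner w y0) = s * (norm w)^2"
      using s0 by (simp add: cinner_self norm_mult abs_of_nonneg norm_power)
    also have "s * (norm w)^2 = r / 2 * norm w" using nw by (simp add: s_def power2_eq_square)
    finally have "r / 2 * norm w \<le> 2 * (real n * norm (adj T w))"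
      using norm_triangle_ineq4[of "cinner w y" "cinner w y0"] b1 b2 by linarith
    thus ?thesis using r by (simp add: field_simps)
  qed
  thus ?thesis unfolding R_def by blast
qed

lemma adj_range_closed:
  fixes T :: "'a::chilbert_space \<Rightarrow> 'a"
  assumes T: "bounded_clinear T" and cl: "closed (range T)"
    and C: "\<forall>w\<in>range T. norm w \<le> C * norm (adj T w)"
  shows "closed (adj T ` range T)"
  unfolding closed_sequential_limits
proof (intro allI impI, elim conjE)
  fix x l assume x: "\<forall>n. x n \<in> adj T ` range T" and xl: "x \<longlonglongrightarrow> l"
  have A: "bounded_clinear (adj T)" by (rule adj_bcl[OF T])
  have Rsub: "csubspace (range T)" by (rule range_csubspace[OF T])
  have "\<forall>n. \<exists>u. u \<in> range T \<and> x n = adj T u" using x by blast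
  from choice[OF this] obtain w where wp: "\<forall>n. w n \<in> range T \<and> x n = adj T (w n)" by blast
  have w: "\<And>n. w n \<in> range T" and xw: "\<And>n. x n = adj T (w n)" using wp by auto
  define C' where "C' = \<bar>C\<bar> + 1"
  have C'0: "C' > 0" unfolding C'_def using abs_ge_zero[of C] by linarith
  have C': "norm v \<le> C' * norm (adj T v)" if "v \<in> range T" for v
  proof -
    have "norm v \<le> C * norm (adj T v)" using C that by blast
    also have "\<dots> \<le> C' * norm (adj T v)" by (rule mult_right_mono) (auto simp: C'_def)
    finally show ?thesis .
  qed
  have cx: "Cauchy x" using xl by (rule LIMSEQ_imp_Cauchy)
  have "Cauchy w"
  proof (rule metric_CauchyI)
    fix e :: real assume e: "e > 0"
    then obtain N where N: "\<forall>m\<ge>N. \<forall>n\<ge>N. dist (x m) (x n) < e / C'"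
      using metric_CauchyD[OF cx, of "e / C'"] C'0 by auto
    show "\<exists>N. \<forall>m\<ge>N. \<forall>n\<ge>N. dist (w m) (w n) < e"
    proof (intro exI allI impI)
      fix m n assume mn: "N \<le> m" "N \<le> n"
      have "norm (w m - w n) \<le> C' * norm (adj T (w m - w n))"
        by (rule C') (rule csubspace_diff[OF Rsub w w])
      also have "adj T (w m - w n) = x m - x n" by (simp add: xw bcl_diff[OF A])
      also have "C' * norm (x m - x n) < C' * (e / C')"
      proof (rule mult_strict_left_mono)
        show "norm (x m - x n) < e / C'" using N mn by (simp add: dist_norm)
      qed (rule C'0)
      also have "\<dots> = e" using C'0 by simp
      finally show "dist (w m) (w n) < e" by (simp add: dist_norm)
    qed
  qed
  hence "convergent w" by (simp add: Cauchy_convergent_iff)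
  then obtain wl where wl: "w \<longlonglongrightarrow> wl" unfolding convergent_def by blast
  have wlR: "wl \<in> range T" using closed_sequentially[OF cl] w wl by blast
  have "(\<lambda>n. adj T (w n)) \<longlonglongrightarrow> adj T wl"
    by (rule bounded_linear.tendsto[OF bcl_bounded_linear[OF A] wl])
  moreover have "(\<lambda>n. adj T (w n)) = x" using xw by auto
  ultimately have "x \<longlonglongrightarrow> adj T wl" by simp
  hence "l = adj T wl" using xl LIMSEQ_unique by blast
  thus "l \<in> adj T ` range T" using wlR by blast
qed

lemma adj_range_csubspace:
  fixes T :: "'a::chilbert_space \<Rightarrow> 'a"
  assumes T: "bounded_clinear T"
  shows "csubspace (adj T ` range T)"
proof -
  have A: "bounded_clinear (adj T)" by (rule adj_bcl[OF T])
  have R: "csubspace (range T)" by (rule range_csubspace[OF T])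
  show ?thesis unfolding csubspace_def
  proof (intro conjI ballI allI)
    have "adj T 0 = 0" by (rule bcl_zero[OF A])
    thus "0 \<in> adj T ` range T" using csubspace_0[OF R] by (metis image_eqI)
    show "x + y \<in> adj T ` range T" if "x \<in> adj T ` range T" "y \<in> adj T ` range T" for x y
    proof -
      from that obtain a b where ab: "a \<in> range T" "b \<in> range T" "x = adj T a" "y = adj T b" by blast
      hence "x + y = adj T (a + b)" by (simp add: bcl_add[OF A])
      moreover have "a + b \<in> range T" using csubspace_add[OF R ab(1,2)] .
      ultimately show ?thesis by blast
    qed
    show "c *\<^sub>C x \<in> adj T ` range T" if "x \<in> adj T ` range T" for c x
    proof -
      from that obtain a where ab: "a \<in> range T" "x = adj T a" by blast
      hence "c *\<^sub>C x = adj T (c *\<^sub>C a)" by (simp add: bcl_scaleC[OF A])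
      moreover have "c *\<^sub>C a \<in> range T" using csubspace_scaleC[OF R ab(1)] .
      ultimately show ?thesis by blast
    qed
  qed
qed

lemma bounded_below:
  fixes T :: "'a::chilbert_space \<Rightarrow> 'a"
  assumes T: "bounded_clinear T" and cl: "closed (range T)"
  shows "\<exists>C. \<forall>v. (\<forall>n. T n = 0 \<longrightarrow> cinner n v = 0) \<longrightarrow> norm v \<le> C * norm (T v)"
proof -
  obtain C where C: "\<forall>w\<in>range T. norm w \<le> C * norm (adj T w)" using baire_bound[OF T cl] by blast
  define M where "M = adj T ` range T"
  have Mcl: "closed M" unfolding M_def by (rule adj_range_closed[OF T cl C])
  have Ms: "csubspace M" unfolding M_def by (rule adj_range_csubspace[OF T])
  have A: "bounded_clinear (adj T)" by (rule adj_bcl[OF T])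
  have "norm v \<le> C * norm (T v)" if V: "\<forall>n. T n = 0 \<longrightarrow> cinner n v = 0" for v
  proof -
    define p where "p = proj M v"
    define z where "z = v - p"
    have pM: "p \<in> M" unfolding p_def by (rule proj_in[OF Mcl Ms])
    have "cinner (adj T (T z)) z = 0" unfolding z_def p_def
      by (rule proj_orth'[OF Mcl Ms]) (simp add: M_def)
    hence "cinner (T z) (T z) = 0" by (simp add: adj_prop'[OF T])
    hence Tz: "T z = 0" by (simp add: cinner_self_eq_0)
    from pM obtain w0 where "p = adj T w0" by (auto simp: M_def)
    hence "cinner n p = 0" if "T n = 0" for n using that by (simp add: adj_prop[OF T, symmetric])
    hence "cinner n z = 0" if "T n = 0" for n using that V by (simp add: z_def cinner_diff_right)
    hence "cinner z z = 0" using Tz by blast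
    hence "v = p" by (simp add: cinner_self_eq_0 z_def)
    hence "v \<in> M" using pM by simp
    then obtain w where w: "w \<in> range T" "v = adj T w" by (auto simp: M_def)
    have "(norm v)^2 = Re (cinner (adj T w) v)" by (simp add: norm_sq w(2))
    also have "\<dots> = Re (cinner w (T v))" by (simp add: adj_prop'[OF T])
    also have "\<dots> \<le> cmod (cinner w (T v))" by (rule complex_Re_le_cmod)
    also have "\<dots> \<le> norm w * norm (T v)" by (rule Cauchy_Schwarz)
    also have "\<dots> \<le> C * norm (adj T w) * norm (T v)"
      by (rule mult_right_mono) (use C w(1) in blast, simp)
    finally have "norm v * norm v \<le> norm v * (C * norm (T v))" by (simp add: w(2) power2_eq_square algebra_simps)
    thus ?thesis by (cases "v = 0") (simp_all add: bcl_zero[OF T])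
  qed
  thus ?thesis by blast
qed





definition inV :: "('a::complex_inner \<Rightarrow> 'a) \<Rightarrow> 'a \<Rightarrow> bool" where
  "inV T x \<longleftrightarrow> (\<forall>n. T n = 0 \<longrightarrow> cinner n x = 0)"

definition mpS :: "('a::chilbert_space \<Rightarrow> 'a) \<Rightarrow> 'a \<Rightarrow> 'a" where
  "mpS T y = (SOME x. inV T x \<and> T x = proj (range T) y)"

lemma ker_closed:
  fixes T :: "'a::chilbert_space \<Rightarrow> 'a"
  assumes T: "bounded_clinear T" shows "closed {n. T n = 0}"
proof -
  have "{n. T n = 0} = T -` {0}" by auto
  thus ?thesis
    by (metis continuous_closed_vimage closed_singleton linear_continuous_at bcl_bounded_linear[OF T])
qed

lemma ker_csubspace:
  fixes T :: "'a::chilbert_space \<Rightarrow> 'a"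
  assumes T: "bounded_clinear T" shows "csubspace {n. T n = 0}"
  by (simp add: csubspace_def bcl_zero[OF T] bcl_add[OF T] bcl_scaleC[OF T])

lemma inV_unique:
  assumes T: "bounded_clinear T" and "inV T x" "inV T x'" "T x = T x'"
  shows "x = x'"
proof -
  have "T (x - x') = 0" using assms by (simp add: bcl_diff[OF T])
  hence "cinner (x - x') x = 0" "cinner (x - x') x' = 0" using assms(2,3) by (auto simp: inV_def)
  hence "cinner (x - x') (x - x') = 0" by (simp add: cinner_diff_right)
  thus ?thesis by (simp add: cinner_self_eq_0)
qed

context
  fixes T :: "'a::chilbert_space \<Rightarrow> 'a"
  assumes T: "bounded_clinear T" and cl: "closed (range T)"
begin

private lemma Rs: "csubspace (range T)" by (rule range_csubspace[OF T])
private lemma Nc: "closed {n. T n = 0}" by (rule ker_closed[OF T])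
private lemma Ns: "csubspace {n. T n = 0}" by (rule ker_csubspace[OF T])

lemma kerproj_V: "inV T (x - proj {n. T n = 0} x)"
  unfolding inV_def using proj_orth'[OF Nc Ns] by simp

lemma kerproj_T: "T (x - proj {n. T n = 0} x) = T x"
  using proj_in[OF Nc Ns, of x] by (simp add: bcl_diff[OF T])

lemma mpS_prop: "inV T (mpS T y) \<and> T (mpS T y) = proj (range T) y"
proof -
  obtain u where u: "proj (range T) y = T u" using proj_in[OF cl Rs, of y] by blast
  have "inV T (u - proj {n. T n = 0} u) \<and> T (u - proj {n. T n = 0} u) = proj (range T) y"
    using kerproj_V kerproj_T u by simp
  thus ?thesis unfolding mpS_def by (rule someI)
qed

lemma mpS_eq: "inV T x \<Longrightarrow> T x = proj (range T) y \<Longrightarrow> mpS T y = x"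
  using mpS_prop inV_unique[OF T] by metis

lemma mpS_bcl: "bounded_clinear (mpS T)"
proof -
  have a: "mpS T (y1 + y2) = mpS T y1 + mpS T y2" for y1 y2
  proof (rule mpS_eq)
    show "inV T (mpS T y1 + mpS T y2)"
      using mpS_prop[of y1] mpS_prop[of y2] by (simp add: inV_def cinner_add_right)
    show "T (mpS T y1 + mpS T y2) = proj (range T) (y1 + y2)"
      using mpS_prop[of y1] mpS_prop[of y2] by (simp add: bcl_add[OF T] proj_add[OF cl Rs])
  qed
  have s: "mpS T (c *\<^sub>C y) = c *\<^sub>C mpS T y" for c y
  proof (rule mpS_eq)
    show "inV T (c *\<^sub>C mpS T y)"
      using mpS_prop[of y] by (simp add: inV_def cinner_scaleC_right)
    show "T (c *\<^sub>C mpS T y) = proj (range T) (c *\<^sub>C y)"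
      using mpS_prop[of y] by (simp add: bcl_scaleC[OF T] proj_scaleC[OF cl Rs])
  qed
  obtain C where C: "\<forall>v. (\<forall>n. T n = 0 \<longrightarrow> cinner n v = 0) \<longrightarrow> norm v \<le> C * norm (T v)"
    using bounded_below[OF T cl] by blast
  have b: "norm (mpS T y) \<le> norm y * max C 0" for y
  proof -
    have "norm (mpS T y) \<le> C * norm (T (mpS T y))"
      using spec[OF C, of "mpS T y"] mpS_prop[of y] unfolding inV_def by blast
    also have "\<dots> \<le> max C 0 * norm (T (mpS T y))" by (rule mult_right_mono) auto
    also have "\<dots> = max C 0 * norm (proj (range T) y)" using mpS_prop[of y] by simp
    also have "\<dots> \<le> max C 0 * norm y" by (rule mult_left_mono[OF proj_norm[OF cl Rs]]) simp
    finally show ?thesis by (simp add: mult.commute)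
  qed
  show ?thesis unfolding bounded_clinear_def clinear_def using a s b by blast
qed

lemma mpS_T: "mpS T (T x) = x - proj {n. T n = 0} x"
  by (rule mpS_eq) (simp_all add: kerproj_V kerproj_T proj_id[OF cl Rs])

lemma mpS_is_mp: "is_mp_inverse T (mpS T)"
  unfolding is_mp_inverse_def
proof (intro conjI)
  show "bounded_clinear (mpS T)" by (rule mpS_bcl)
  show "T \<circ> mpS T \<circ> T = T"
    by (rule ext) (simp add: mpS_prop proj_id[OF cl Rs])
  show "mpS T \<circ> T \<circ> mpS T = mpS T"
  proof (rule ext)
    fix y show "(mpS T \<circ> T \<circ> mpS T) y = mpS T y"
    proof -
      have "mpS T (T (mpS T y)) = mpS T y"
      proof (rule mpS_eq)
        show "inV T (mpS T y)" using mpS_prop[of y] by blast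
        show "T (mpS T y) = proj (range T) (T (mpS T y))" by (rule proj_id[OF cl Rs, symmetric]) simp
      qed
      thus ?thesis by simp
    qed
  qed
  show "adj (mpS T \<circ> T) = mpS T \<circ> T"
  proof (rule adj_unique, intro allI)
    fix x y
    show "cinner ((mpS T \<circ> T) x) y = cinner x ((mpS T \<circ> T) y)"
      using proj_sym[OF Nc Ns, of x y] by (simp add: mpS_T cinner_diff_left cinner_diff_right)
  qed
  show "adj (T \<circ> mpS T) = T \<circ> mpS T"
  proof (rule adj_unique, intro allI)
    fix x y
    show "cinner ((T \<circ> mpS T) x) y = cinner x ((T \<circ> mpS T) y)"
      using proj_sym[OF cl Rs, of x y] by (simp add: mpS_prop)
  qed
qed

lemma mp_unique:
  assumes S: "is_mp_inverse T S'"
  shows "S' = mpS T"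
proof
  fix y
  have S'b: "bounded_clinear S'" and TST: "T \<circ> S' \<circ> T = T" and STS: "S' \<circ> T \<circ> S' = S'"
    and a1: "adj (S' \<circ> T) = S' \<circ> T" and a2: "adj (T \<circ> S') = T \<circ> S'"
    using S by (auto simp: is_mp_inverse_def)
  have sym1: "cinner (S' (T x)) w = cinner x (S' (T w))" for x w
    using adj_prop[OF bcl_comp[OF S'b T], of x w] a1 by simp
  have sym2: "cinner (T (S' x)) w = cinner x (T (S' w))" for x w
    using adj_prop[OF bcl_comp[OF T S'b], of x w] a2 by simp
  have tst: "T (S' (T u)) = T u" for u using fun_cong[OF TST, of u] by simp
  have sts: "S' (T (S' u)) = S' u" for u using fun_cong[OF STS, of u] by simp
  show "S' y = mpS T y"
  proof (rule mpS_eq[symmetric])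
    show "inV T (S' y)" unfolding inV_def
    proof (intro allI impI)
      fix n assume n: "T n = 0"
      have "cinner n (S' y) = cinner n (S' (T (S' y)))" by (simp add: sts)
      also have "\<dots> = cinner (S' (T n)) (S' y)" by (simp add: sym1)
      also have "\<dots> = 0" using n bcl_zero[OF S'b] by simp
      finally show "cinner n (S' y) = 0" .
    qed
    show "T (S' y) = proj (range T) y"
    proof (rule proj_unique[OF cl Rs, symmetric])
      show "T (S' y) \<in> range T" by simp
      show "\<forall>m\<in>range T. cinner (y - T (S' y)) m = 0"
      proof
        fix m assume "m \<in> range T"
        then obtain u where u: "m = T u" by blast
        have "cinner (T (S' y)) (T u) = cinner y (T (S' (T u)))" by (rule sym2)
        also have "\<dots> = cinner y (T u)" by (simp add: tst)
        finally show "cinner (y - T (S' y)) m = 0" by (simp add: u cinner_diff_left)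
      qed
    qed
  qed
qed

lemma mp_inverse_eq: "mp_inverse T = mpS T"
  unfolding mp_inverse_def
  by (rule the_equality) (auto intro: mpS_is_mp mp_unique)

end




theorem mainTheorem5:
  fixes T :: "'a::chilbert_space \<Rightarrow> 'a"
  assumes "bounded_clinear T"
    and "quasi_normal T"
    and "closed (range T)"
  shows "SD T"
proof -
  have T: "bounded_clinear T" and qn0: "quasi_normal T" and cl: "closed (range T)" using assms by auto
  have Rs: "csubspace (range T)" by (rule range_csubspace[OF T])
  have qn: "T (adj T (T v)) = adj T (T (T v))" for v
    using fun_cong[OF qn0[unfolded quasi_normal_def], of v] by simp
  have "adj T \<circ> mp_inverse T = mp_inverse T \<circ> adj T"
  proof (rule ext)
    fix y
    define x where "x = mpS T y"
    have Tx: "T x = proj (range T) y" using mpS_prop[OF T cl, of y] by (simp add: x_def)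
    have "mpS T (adj T y) = adj T x"
    proof (rule mpS_eq[OF T cl])
      show "inV T (adj T x)" unfolding inV_def
        by (simp add: adj_prop[OF T, symmetric])
      show "T (adj T x) = proj (range T) (adj T y)"
      proof (rule proj_unique[OF cl Rs, symmetric])
        show "T (adj T x) \<in> range T" by simp
        show "\<forall>m\<in>range T. cinner (adj T y - T (adj T x)) m = 0"
        proof
          fix m assume "m \<in> range T"
          then obtain v where v: "m = T v" by blast
          have o: "cinner (y - proj (range T) y) (T (T v)) = 0" by (rule proj_orth[OF cl Rs]) simp
          have "cinner (adj T y) (T v) = cinner y (T (T v))" by (rule adj_prop'[OF T])
          also have "\<dots> = cinner (proj (range T) y) (T (T v))" using o by (simp add: cinner_diff_left)
          also have "\<dots> = cinner x (adj T (T (T v)))" by (simp add: Tx[symmetric] adj_prop[OF T])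
          also have "\<dots> = cinner x (T (adj T (T v)))" by (simp add: qn)
          also have "\<dots> = cinner (adj T x) (adj T (T v))" by (simp add: adj_prop'[OF T])
          also have "\<dots> = cinner (T (adj T x)) (T v)" by (simp add: adj_prop[OF T])
          finally show "cinner (adj T y - T (adj T x)) m = 0" by (simp add: v cinner_diff_left)
        qed
      qed
    qed
    thus "(adj T \<circ> mp_inverse T) y = (mp_inverse T \<circ> adj T) y"
      by (simp add: mp_inverse_eq[OF T cl] x_def)
  qed
  thus ?thesis unfolding SD_def using cl by simp
qed

end
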